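(* Consider a CMILS instance and let $(x,y)$ satisfy $x_{s,i}\in[0,1]$ for all $i\in[N]$, $s\in[r_i]$, $\sum_{s\in[r_i]}x_{s,i}=1$ for every $i\in[N]$, and $y\in[0,1]^T$. For every interval $(a,b]$ over $[T]$ let $R_{a,b}:=\sum_{i\in[N]:\ r_i\in(a,b]}\max\{1-\frac52x_{[a],i},0\}d_i$. Let $(a,b]$ be an interval with $R_{a,b}>0$, let $I=\{i\in[N]: r_i\in(a,b],\ x_{[a],i}<\frac25\}$, and let $(S_1,S_2)$ be any partition of $(a,b]$ into two parts with $C(S_1)<R_{a,b}$. If $$C(S_1)+\sum_{s\in S_2}\min\{C_s,\,d(I)-C(S_1)\}\,y_s+\sum_{i\in I}x_{[T]\setminus(S_1\cup S_2),i}\,d_i\ \ge\ d(I),$$ then either $$\sum_{s\in S_2}\min\{C_s,\,R_{a,b}-C(S_1)\}\,y_s\ \ge\ R_{a,b}-C(S_1)\quad\text{or}\quad\sum_{s\in S_2:\ C_s\ge R_{a,b}-C(S_1)}y_s\ \ge\ \tfrac35.$$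
   Context: CMILS instance: periods $[T]$, items $[N]$; item $i$ has demand $d_i>0$ due by time $r_i\in[T]$; period $s$ has capacity $C_s>0$ (and ordering cost $K_s>0$); holding costs are irrelevant here. Notation: $x_{s,i}=0$ for $s>r_i$; $x_{S,i}=\sum_{s\in S}x_{s,i}$ for $S\subseteq[T]$; $[a]=\{1,\dots,a\}$ ($[0]=\emptyset$); $(a,b]=\{a+1,\dots,b\}$ and an interval over $[T]$ is $(a,b]$ with integers $0\le a<b\le T$; $C(S)=\sum_{s\in S}C_s$; $d(I)=\sum_{i\in I}d_i$. *)

theory Defs
  imports Complex_Main
begin

text \<open>CMILS instance data: periods 1..T, items 1..N; demand d i > 0 due by r i \<in> {1..T};
  capacity C s > 0 and ordering cost K s > 0 for s \<in> {1..T}.\<close>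
definition cmils_instance ::
  "nat \<Rightarrow> nat \<Rightarrow> (nat \<Rightarrow> real) \<Rightarrow> (nat \<Rightarrow> nat) \<Rightarrow> (nat \<Rightarrow> real) \<Rightarrow> (nat \<Rightarrow> real) \<Rightarrow> bool" where
  "cmils_instance T N d r C K \<longleftrightarrow>
     (\<forall>i\<in>{1..N}. d i > 0 \<and> r i \<in> {1..T}) \<and> (\<forall>s\<in>{1..T}. C s > 0 \<and> K s > 0)"

definition xS :: "(nat \<Rightarrow> nat \<Rightarrow> real) \<Rightarrow> nat set \<Rightarrow> nat \<Rightarrow> real" where
  "xS x S i = (\<Sum>s\<in>S. x s i)"

definition capS :: "(nat \<Rightarrow> real) \<Rightarrow> nat set \<Rightarrow> real" where
  "capS C S = (\<Sum>s\<in>S. C s)"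

definition dem :: "(nat \<Rightarrow> real) \<Rightarrow> nat set \<Rightarrow> real" where
  "dem d I = (\<Sum>i\<in>I. d i)"

definition Rab :: "nat \<Rightarrow> (nat \<Rightarrow> nat) \<Rightarrow> (nat \<Rightarrow> real) \<Rightarrow> (nat \<Rightarrow> nat \<Rightarrow> real) \<Rightarrow> nat \<Rightarrow> nat \<Rightarrow> real" where
  "Rab N r d x a b =
     (\<Sum>i\<in>{i\<in>{1..N}. r i \<in> {a<..b}}. max (1 - 5/2 * xS x {1..a} i) 0 * d i)"

end

theory Submission
  imports Defs
begin

theorem lemma2:
  fixes T N :: nat and d :: "nat \<Rightarrow> real" and r :: "nat \<Rightarrow> nat"
    and C K :: "nat \<Rightarrow> real" and x :: "nat \<Rightarrow> nat \<Rightarrow> real" and y :: "nat \<Rightarrow> real"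
    and a b :: nat and I S1 S2 :: "nat set"
  assumes inst: "cmils_instance T N d r C K"
    and x01: "\<forall>i\<in>{1..N}. \<forall>s\<in>{1..r i}. 0 \<le> x s i \<and> x s i \<le> 1"
    and xzero: "\<forall>i\<in>{1..N}. \<forall>s. r i < s \<longrightarrow> x s i = 0"
    and xsum1: "\<forall>i\<in>{1..N}. xS x {1..r i} i = 1"
    and y01: "\<forall>s\<in>{1..T}. 0 \<le> y s \<and> y s \<le> 1"
    and ab: "a < b" "b \<le> T"
    and Rpos: "Rab N r d x a b > 0"
    and I_def: "I = {i\<in>{1..N}. r i \<in> {a<..b} \<and> xS x {1..a} i < 2/5}"
    and part: "S1 \<union> S2 = {a<..b}" "S1 \<inter> S2 = {}"
    and cS1: "capS C S1 < Rab N r d x a b"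
    and hyp: "capS C S1 + (\<Sum>s\<in>S2. min (C s) (dem d I - capS C S1) * y s)
                + (\<Sum>i\<in>I. xS x ({1..T} - (S1 \<union> S2)) i * d i) \<ge> dem d I"
  shows "(\<Sum>s\<in>S2. min (C s) (Rab N r d x a b - capS C S1) * y s) \<ge> Rab N r d x a b - capS C S1
         \<or> (\<Sum>s\<in>{s\<in>S2. C s \<ge> Rab N r d x a b - capS C S1}. y s) \<ge> 3/5"
proof -
  define R where "R = Rab N r d x a b"
  define c1 where "c1 = capS C S1"
  define D where "D = dem d I"
  define X where "X = (\<Sum>i\<in>I. xS x {1..a} i * d i)"
  define \<Delta> where "\<Delta> = R - c1"
  define E where "E = D - c1"
  have finI: "finite I" unfolding I_def by simp
  have S2sub: "S2 \<subseteq> {a<..b}" using part by blast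
  have finS2: "finite S2" using S2sub finite_subset by blast
  have S2y: "\<And>s. s \<in> S2 \<Longrightarrow> 0 \<le> y s" using S2sub y01 ab by fastforce
  have Ii: "\<And>i. i \<in> I \<Longrightarrow> i \<in> {1..N} \<and> a < r i \<and> r i \<le> b \<and> xS x {1..a} i < 2/5"
    unfolding I_def by auto
  have X3: "(\<Sum>i\<in>I. xS x ({1..T} - (S1 \<union> S2)) i * d i) = X"
    unfolding X_def
  proof (rule sum.cong[OF refl])
    fix i assume iI: "i \<in> I"
    have set: "{1..T} - (S1 \<union> S2) = {1..a} \<union> {b<..T}" using part ab by auto
    have z: "xS x {b<..T} i = 0" unfolding xS_def using Ii[OF iI] xzero by auto
    have "xS x ({1..a} \<union> {b<..T}) i = xS x {1..a} i + xS x {b<..T} i"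
      unfolding xS_def by (rule sum.union_disjoint) (use ab in auto)
    then show "xS x ({1..T} - (S1 \<union> S2)) i * d i = xS x {1..a} i * d i"
      using set z by simp
  qed
  have Xnn: "\<And>i. i \<in> I \<Longrightarrow> 0 \<le> xS x {1..a} i"
  proof -
    fix i assume iI: "i \<in> I"
    show "0 \<le> xS x {1..a} i" unfolding xS_def
      using Ii[OF iI] x01 by (intro sum_nonneg) auto
  qed
  have dpos: "\<And>i. i \<in> I \<Longrightarrow> 0 < d i" using Ii inst unfolding cmils_instance_def by blast
  have zz: "\<And>i. \<not> xS x {1..a} i < 2/5 \<Longrightarrow> max (1 - 5/2 * xS x {1..a} i) 0 = 0" by simp
  have Req: "R = (\<Sum>i\<in>I. (1 - 5/2 * xS x {1..a} i) * d i)"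
  proof -
    have "R = (\<Sum>i\<in>I. max (1 - 5/2 * xS x {1..a} i) 0 * d i)"
    proof -
      have h: "\<forall>i\<in>{i \<in> {1..N}. r i \<in> {a<..b}} - I. max (1 - 5/2 * xS x {1..a} i) 0 * d i = 0"
      proof
        fix i assume "i \<in> {i \<in> {1..N}. r i \<in> {a<..b}} - I"
        then have "\<not> xS x {1..a} i < 2/5" unfolding I_def by auto
        then show "max (1 - 5/2 * xS x {1..a} i) 0 * d i = 0" using zz by simp
      qed
      have sub: "I \<subseteq> {i \<in> {1..N}. r i \<in> {a<..b}}" unfolding I_def by auto
      have "(\<Sum>i\<in>{i \<in> {1..N}. r i \<in> {a<..b}}. max (1 - 5/2 * xS x {1..a} i) 0 * d i) = (\<Sum>i\<in>I. max (1 - 5/2 * xS x {1..a} i) 0 * d i)"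
        by (rule sum.mono_neutral_right[OF _ sub h]) simp
      then show ?thesis unfolding R_def Rab_def .
    qed
    also have "\<dots> = (\<Sum>i\<in>I. (1 - 5/2 * xS x {1..a} i) * d i)"
    proof (rule sum.cong[OF refl])
      fix i assume "i \<in> I"
      then have "xS x {1..a} i < 2/5" using Ii by blast
      then show "max (1 - 5/2 * xS x {1..a} i) 0 * d i = (1 - 5/2 * xS x {1..a} i) * d i" by simp
    qed
    finally show ?thesis .
  qed
  have RDX: "R = D - 5/2 * X"
    unfolding Req D_def dem_def X_def
    by (simp add: algebra_simps sum_subtractf sum_distrib_left)
  have X0: "0 \<le> X" unfolding X_def using Xnn dpos
    by (intro sum_nonneg) (simp add: less_imp_le)
  have EDelta: "E - \<Delta> = 5/2 * X" unfolding E_def \<Delta>_def using RDX by simp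
  have hyp2: "(\<Sum>s\<in>S2. min (C s) E * y s) \<ge> E - X"
    using hyp X3 unfolding E_def c1_def D_def by linarith
  define B where "B = {s\<in>S2. C s \<ge> \<Delta>}"
  define Sm where "Sm = {s\<in>S2. \<not> C s \<ge> \<Delta>}"
  define Y where "Y = (\<Sum>s\<in>B. y s)"
  define A where "A = (\<Sum>s\<in>Sm. C s * y s)"
  have split: "\<And>f. (\<Sum>s\<in>S2. f s) = (\<Sum>s\<in>B. f s) + (\<Sum>s\<in>Sm. f s)"
  proof -
    fix f
    have "S2 = B \<union> Sm" unfolding B_def Sm_def by auto
    moreover have "(\<Sum>s\<in>B \<union> Sm. f s) = (\<Sum>s\<in>B. f s) + (\<Sum>s\<in>Sm. f s)"
      by (rule sum.union_disjoint) (use finS2 in \<open>auto simp: B_def Sm_def\<close>)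
    ultimately show "(\<Sum>s\<in>S2. f s) = (\<Sum>s\<in>B. f s) + (\<Sum>s\<in>Sm. f s)" by simp
  qed
  have "(\<Sum>s\<in>B. min (C s) E * y s) \<le> (\<Sum>s\<in>B. E * y s)"
    by (rule sum_mono) (auto simp: B_def intro!: mult_right_mono S2y)
  also have "\<dots> = E * Y" unfolding Y_def by (simp add: sum_distrib_left)
  finally have b1: "(\<Sum>s\<in>B. min (C s) E * y s) \<le> E * Y" .
  have b2: "(\<Sum>s\<in>Sm. min (C s) E * y s) = A"
    unfolding A_def using EDelta X0 by (intro sum.cong) (auto simp: Sm_def)
  have b3: "(\<Sum>s\<in>B. min (C s) \<Delta> * y s) = \<Delta> * Y"
    unfolding Y_def by (auto simp: B_def sum_distrib_left intro!: sum.cong)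
  have b4: "(\<Sum>s\<in>Sm. min (C s) \<Delta> * y s) = A"
    unfolding A_def by (intro sum.cong) (auto simp: Sm_def)
  have main: "A + E * Y \<ge> E - X" using hyp2 split[of "\<lambda>s. min (C s) E * y s"] b1 b2 by linarith
  show ?thesis
  proof (cases "Y \<ge> 3/5")
    case True then show ?thesis unfolding Y_def B_def \<Delta>_def R_def c1_def by simp
  next
    case False
    have "0 \<le> (E - \<Delta>) * (3/5 - Y)" using False EDelta X0 by simp
    then have q: "0 \<le> 3/2 * X - 5/2 * (X * Y)" using EDelta by (simp add: algebra_simps)
    have "E = \<Delta> + 5/2 * X" using EDelta by simp
    then have "E * Y = \<Delta> * Y + 5/2 * (X * Y)" by (simp add: algebra_simps)
    then have "A + \<Delta> * Y \<ge> \<Delta>" using main EDelta q by linarith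
    then have "(\<Sum>s\<in>S2. min (C s) \<Delta> * y s) \<ge> \<Delta>"
      using split[of "\<lambda>s. min (C s) \<Delta> * y s"] b3 b4 by linarith
    then show ?thesis unfolding \<Delta>_def R_def c1_def by simp
  qed
qed

end
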